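(* Let $n\in\mathbb{N}$ and let $A$ be an $n\times n$ acyclic real symmetric matrix. Suppose $\lambda$ is an eigenvalue of $A$ of multiplicity one and $u\in[n]$ is an index with $\phi(A-u,\lambda)\neq 0$. Define $\boldsymbol{\alpha}\in\mathbb{R}^n$ by \[ \boldsymbol{\alpha}(v)=\begin{cases} W(P_{u,v})\,\phi(A-P_{u,v},\lambda) & \text{if there is a path from } u \text{ to } v \text{ in } G(A),\\ 0 & \text{otherwise}.\end{cases} \] Then $\boldsymbol{\alpha}$ is a $\lambda$-eigenvector of $A$.
   Context: $[n]=\{1,\ldots,n\}$. For a real symmetric $n\times n$ matrix $A$, its graph $G(A)$ has vertex set $[n]$, with $u\neq v$ adjacent iff $A_{uv}\neq 0$; each edge $uv$ has weight $w(uv)=A_{uv}$ and each vertex $v$ has weight $w(v)=A_{vv}$. $A$ is called acyclic if $G(A)$ is a forest (i.e. $A$ is the adjacency matrix of a weighted forest with nonzero real edge weights and possibly vertex weights). When $u,v$ lie in the same component of the forest, $P_{u,v}$ denotes the unique path between them (a single vertex if $u=v$), and $W(P_{u,v})$ is the product of the weights of the edges of $P_{u,v}$ (equal to $1$ if $u=v$). For an index set (or vertex set of a subgraph) $U$, $A-U$ is the matrix obtained from $A$ by deleting rows and columns indexed by $U$. $\phi(B,\lambda)=\det(\lambda \mathbb{I}-B)$ is the characteristic polynomial evaluated at $\lambda$, with $\phi$ of the empty matrix equal to $1$. *)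

theory Defs
  imports "Jordan_Normal_Form.Char_Poly" "Jordan_Normal_Form.DL_Submatrix"
begin

text \<open>Matrices are Jordan_Normal_Form matrices; indices are 0,...,n-1 (instead of 1,...,n).\<close>

definition mat_adj :: "real mat \<Rightarrow> nat \<Rightarrow> nat \<Rightarrow> bool" where
  "mat_adj A u v \<longleftrightarrow> u \<noteq> v \<and> u < dim_row A \<and> v < dim_row A \<and> A $$ (u, v) \<noteq> 0"

definition is_gpath :: "real mat \<Rightarrow> nat list \<Rightarrow> bool" where
  "is_gpath A p \<longleftrightarrow> p \<noteq> [] \<and> distinct p \<and> set p \<subseteq> {..<dim_row A} \<and>
     (\<forall>i. Suc i < length p \<longrightarrow> mat_adj A (p ! i) (p ! Suc i))"

definition gpath_from :: "real mat \<Rightarrow> nat \<Rightarrow> nat \<Rightarrow> nat list \<Rightarrow> bool" where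
  "gpath_from A u v p \<longleftrightarrow> is_gpath A p \<and> hd p = u \<and> last p = v"

definition is_gcycle :: "real mat \<Rightarrow> nat list \<Rightarrow> bool" where
  "is_gcycle A c \<longleftrightarrow> length c \<ge> 3 \<and> is_gpath A c \<and> mat_adj A (last c) (hd c)"

definition acyclic_mat :: "real mat \<Rightarrow> bool" where
  "acyclic_mat A \<longleftrightarrow> (\<nexists>c. is_gcycle A c)"

text \<open>The (unique, in a forest) path P_{u,v}.\<close>
definition upath :: "real mat \<Rightarrow> nat \<Rightarrow> nat \<Rightarrow> nat list" where
  "upath A u v = (THE p. gpath_from A u v p)"

definition path_weight :: "real mat \<Rightarrow> nat list \<Rightarrow> real" where
  "path_weight A p = (\<Prod>i<length p - 1. A $$ (p ! i, p ! Suc i))"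

definition del_mat :: "real mat \<Rightarrow> nat set \<Rightarrow> real mat" where
  "del_mat A U = submatrix A ({..<dim_row A} - U) ({..<dim_col A} - U)"

text \<open>phi(B, lambda) = det(lambda I - B).\<close>
definition phi :: "real mat \<Rightarrow> real \<Rightarrow> real" where
  "phi B x = poly (char_poly B) x"

definition alpha_vec :: "real mat \<Rightarrow> nat \<Rightarrow> real \<Rightarrow> real vec" where
  "alpha_vec A u x = vec (dim_row A) (\<lambda>v.
     if \<exists>p. gpath_from A u v p
     then path_weight A (upath A u v) * phi (del_mat A (set (upath A u v))) x
     else 0)"

end

theory Submission
  imports Defs
begin

definition Dset :: "(nat \<Rightarrow> nat \<Rightarrow> real) \<Rightarrow> nat set \<Rightarrow> real" where
  "Dset B S = (\<Sum>p\<in>{p. p permutes S}. of_int (sign p) * (\<Prod>i\<in>S. B i (p i)))"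

definition conjp :: "(nat \<Rightarrow> nat) \<Rightarrow> nat set \<Rightarrow> nat set \<Rightarrow> (nat \<Rightarrow> nat) \<Rightarrow> (nat \<Rightarrow> nat)" where
  "conjp f T S p = (\<lambda>x. if x \<in> S then f (p (inv_into T f x)) else x)"

lemma conjp_permutes:
  assumes bij: "bij_betw f T S" and p: "p permutes T"
  shows "conjp f T S p permutes S"
proof (rule bij_imp_permutes)
  have "bij_betw (f \<circ> p \<circ> inv_into T f) S S"
    by (meson bij bij_betw_inv_into bij_betw_trans p permutes_imp_bij)
  then show "bij_betw (conjp f T S p) S S"
    by (rule bij_betw_cong[THEN iffD1, rotated]) (simp add: conjp_def)
qed (simp add: conjp_def)

lemma conjp_back:
  assumes bij: "bij_betw f T S" and p: "p permutes T"
  shows "conjp (inv_into T f) S T (conjp f T S p) = p"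
proof
  fix x
  show "conjp (inv_into T f) S T (conjp f T S p) x = p x"
  proof (cases "x \<in> T")
    case True
    have fx: "f x \<in> S" using bij True bij_betwE by blast
    have ii: "inv_into S (inv_into T f) x = f x"
      by (metis True bij bij_betw_def inv_into_inv_into_eq)
    have px: "p x \<in> T" using p True by (simp add: permutes_in_image)
    show ?thesis using True fx px bij
      by (simp add: conjp_def ii bij_betw_inv_into_left)
  next
    case False
    then show ?thesis using p by (simp add: conjp_def permutes_not_in)
  qed
qed

lemma conjp_transpose:
  assumes bij: "bij_betw f T S" and p: "p permutes T" and a: "a \<in> T" and b: "b \<in> T"
  shows "conjp f T S (Transposition.transpose a b \<circ> p) = Transposition.transpose (f a) (f b) \<circ> conjp f T S p"
proof
  fix x
  show "conjp f T S (Transposition.transpose a b \<circ> p) x = (Transposition.transpose (f a) (f b) \<circ> conjp f T S p) x"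
  proof (cases "x \<in> S")
    case True
    have g: "inv_into T f x \<in> T" using True bij by (metis bij_betw_def inv_into_into)
    have pg: "p (inv_into T f x) \<in> T" using g p by (simp add: permutes_in_image)
    have inj: "inj_on f T" using bij bij_betw_def by blast
    show ?thesis using True pg a b inj
      by (auto simp: conjp_def transpose_def inj_on_eq_iff)
  next
    case False
    have "f a \<in> S" "f b \<in> S" using a b bij bij_betwE by blast+
    then show ?thesis using False by (auto simp: conjp_def transpose_def)
  qed
qed

lemma sign_conjp:
  assumes bij: "bij_betw f T S" and p: "p permutes T" and fin: "finite T"
  shows "sign (conjp f T S p) = sign p"
  using p fin
proof (induction rule: permutes_induct)
  case id
  have "conjp f T S id = id"
    using bij by (auto simp: conjp_def fun_eq_iff bij_betw_inv_into_right)
  then show ?case by (metis id_def sign_id)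
next
  case (swap a b p)
  have finS: "finite S" using bij fin bij_betw_finite by blast
  have pc: "permutation (conjp f T S p)"
    using conjp_permutes[OF bij swap.hyps(4)] finS permutation_permutes by blast
  have pp: "permutation p" using swap.hyps(4) fin permutation_permutes by blast
  have inj: "inj_on f T" using bij bij_betw_def by blast
  have ne: "f a \<noteq> f b" using swap.hyps(1-3) inj by (meson inj_on_eq_iff)
  have "sign (conjp f T S (Transposition.transpose a b \<circ> p))
      = sign (Transposition.transpose (f a) (f b) \<circ> conjp f T S p)"
    using conjp_transpose[OF bij swap.hyps(4) swap.hyps(1,2)] by simp
  also have "\<dots> = sign (Transposition.transpose (f a) (f b)) * sign (conjp f T S p)"
    by (rule sign_compose[OF permutation_swap_id pc])
  also have "\<dots> = sign (Transposition.transpose a b) * sign p"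
    using ne swap.hyps(3) swap.IH by (simp add: sign_swap_id)
  also have "\<dots> = sign (Transposition.transpose a b \<circ> p)"
    by (rule sign_compose[OF permutation_swap_id pp, symmetric])
  finally show ?case .
qed

lemma conjp_cong:
  assumes "\<And>x. x \<in> T \<Longrightarrow> f x = f' x" and "p permutes T"
    and "\<And>x. x \<in> S \<Longrightarrow> inv_into T f x \<in> T"
  shows "conjp f' T S p = conjp f T S p"
proof -
  have "inv_into T f' x = inv_into T f x" for x
    unfolding inv_into_def using assms(1) by (simp cong: conj_cong)
  then show ?thesis using assms by (auto simp: conjp_def fun_eq_iff permutes_in_image)
qed

lemma inv_into_inv_into_on:
  assumes "bij_betw f T S" "x \<in> T"
  shows "inv_into S (inv_into T f) x = f x"
  using assms by (metis bij_betw_def inv_into_inv_into_eq)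

lemma Dset_reindex:
  fixes f :: "nat \<Rightarrow> nat"
  assumes bij: "bij_betw f T S" and fin: "finite T"
  shows "(\<Sum>p\<in>{p. p permutes T}. of_int (sign p) * (\<Prod>i\<in>T. C (f i) (f (p i)))) = Dset C S"
  unfolding Dset_def
proof (rule sum.reindex_bij_witness[of _ "conjp (inv_into T f) S T" "conjp f T S"])
  have bij': "bij_betw (inv_into T f) S T" using bij by (rule bij_betw_inv_into)
  have finS: "finite S" using bij fin bij_betw_finite by blast
  fix q assume q: "q \<in> {p. p permutes S}"
  have "conjp (inv_into S (inv_into T f)) T S (conjp (inv_into T f) S T q) = q"
    using conjp_back[OF bij'] q by simp
  moreover have "conjp (inv_into S (inv_into T f)) T S (conjp (inv_into T f) S T q)
     = conjp f T S (conjp (inv_into T f) S T q)"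
    by (rule conjp_cong) (use inv_into_inv_into_on[OF bij] conjp_permutes[OF bij'] q bij' in
       \<open>auto intro: bij_betw_apply[OF bij_betw_inv_into[OF bij]]\<close>)
  ultimately show "conjp f T S (conjp (inv_into T f) S T q) = q" by simp
  show "conjp (inv_into T f) S T q \<in> {p. p permutes T}"
    using conjp_permutes[OF bij'] q by simp
next
  fix p assume p: "p \<in> {p. p permutes T}"
  show "conjp (inv_into T f) S T (conjp f T S p) = p" using conjp_back[OF bij] p by simp
  show "conjp f T S p \<in> {p. p permutes S}" using conjp_permutes[OF bij] p by simp
  have "(\<Prod>x\<in>S. C x (conjp f T S p x)) = (\<Prod>i\<in>T. C (f i) (conjp f T S p (f i)))"
    using prod.reindex_bij_betw[OF bij, of "\<lambda>x. C x (conjp f T S p x)"] by simp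
  also have "\<dots> = (\<Prod>i\<in>T. C (f i) (f (p i)))"
    by (rule prod.cong) (use bij in \<open>auto simp: conjp_def bij_betw_inv_into_left bij_betwE\<close>)
  finally show "of_int (sign (conjp f T S p)) * (\<Prod>x\<in>S. C x (conjp f T S p x)) =
      of_int (sign p) * (\<Prod>i\<in>T. C (f i) (f (p i)))"
    using sign_conjp[OF bij _ fin] p by simp
qed

lemma pick_bij:
  assumes "finite S"
  shows "bij_betw (pick S) {..<card S} S"
proof (rule bij_betw_imageI)
  show "inj_on (pick S) {..<card S}"
    by (rule inj_onI) (metis card_pick_le lessThan_iff)
  show "pick S ` {..<card S} = S"
  proof
    show "pick S ` {..<card S} \<subseteq> S" using pick_in_set_le by auto
    show "S \<subseteq> pick S ` {..<card S}"
    proof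
      fix i assume i: "i \<in> S"
      have "{a\<in>S. a < i} \<subset> S" using i by auto
      then have "card {a\<in>S. a < i} < card S" using assms psubset_card_mono by blast
      then show "i \<in> pick S ` {..<card S}" using pick_card_in_set[OF i] by force
    qed
  qed
qed

definition Bm :: "real mat \<Rightarrow> real \<Rightarrow> nat \<Rightarrow> nat \<Rightarrow> real" where
  "Bm A x i j = (if i = j then x else 0) - A $$ (i,j)"

lemma phi_del_mat:
  assumes A: "A \<in> carrier_mat n n"
  shows "phi (del_mat A U) x = Dset (Bm A x) ({..<n} - U)"
proof -
  define S where "S = {..<n} - U"
  define m where "m = card S"
  have finS: "finite S" by (simp add: S_def)
  have cS: "{i. i < n \<and> i \<in> S} = S" by (auto simp: S_def)
  have D: "del_mat A U = submatrix A S S" using A by (simp add: del_mat_def S_def)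
  have M: "del_mat A U \<in> carrier_mat m m"
    using A unfolding carrier_mat_def D by (simp add: dim_submatrix cS m_def)
  have bij: "bij_betw (pick S) {..<m} S" using pick_bij[OF finS] by (simp add: m_def)
  have ent: "(- char_matrix (del_mat A U) x) $$ (i,j) = Bm A x (pick S i) (pick S j)"
    if "i < m" "j < m" for i j
  proof -
    have "pick S i = pick S j \<longleftrightarrow> i = j"
      using bij that by (metis bij_betw_imp_inj_on inj_on_eq_iff lessThan_iff)
    moreover have "submatrix A S S $$ (i,j) = A $$ (pick S i, pick S j)"
      using that A by (intro submatrix_index) (auto simp: cS m_def)
    moreover have "(- char_matrix (del_mat A U) x) $$ (i,j) =
        - (del_mat A U $$ (i,j) + (-x) * (if i = j then 1 else 0))"
      using that M by (simp add: char_matrix_def)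
    ultimately show ?thesis by (simp add: Bm_def D)
  qed
  have cm: "- char_matrix (del_mat A U) x \<in> carrier_mat m m"
    using M by (simp add: char_matrix_def)
  have "phi (del_mat A U) x = det (- char_matrix (del_mat A U) x)"
    unfolding phi_def by (rule char_poly_matrix[OF M])
  also have "\<dots> = (\<Sum>p\<in>{p. p permutes {..<m}}. of_int (sign p) *
       (\<Prod>i\<in>{..<m}. Bm A x (pick S i) (pick S (p i))))"
    unfolding det_def'[OF cm] atLeast0LessThan
  proof (rule sum.cong[OF refl])
    fix p assume p: "p \<in> {p. p permutes {..<m}}"
    have "(\<Prod>i\<in>{..<m}. (- char_matrix (del_mat A U) x) $$ (i, p i)) =
       (\<Prod>i\<in>{..<m}. Bm A x (pick S i) (pick S (p i)))"
    proof (rule prod.cong[OF refl])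
      fix i assume "i \<in> {..<m}"
      then have i1: "i < m" by simp
      have "p i \<in> {..<m}" using permutes_in_image[of p "{..<m}" i] p \<open>i \<in> {..<m}\<close> by simp
      then have i2: "p i < m" by simp
      show "(- char_matrix (del_mat A U) x) $$ (i, p i) = Bm A x (pick S i) (pick S (p i))"
        by (rule ent[OF i1 i2])
    qed
    then show "of_int (sign p) * (\<Prod>i\<in>{..<m}. (- char_matrix (del_mat A U) x) $$ (i, p i)) =
       of_int (sign p) * (\<Prod>i\<in>{..<m}. Bm A x (pick S i) (pick S (p i)))" by (rule arg_cong[where f="\<lambda>t. of_int (sign p) * t"])
  qed
  also have "\<dots> = Dset (Bm A x) S"
    using Dset_reindex[OF bij, of "Bm A x"] by simp
  finally show ?thesis unfolding S_def .
qed

lemma adj_of_Bm: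
  assumes A: "A \<in> carrier_mat n n" and "i < n" "j < n" "i \<noteq> j" "Bm A x i j \<noteq> 0"
  shows "mat_adj A i j"
  using assms by (auto simp: Bm_def mat_adj_def)

lemma perm_cycle_zero:
  assumes A: "A \<in> carrier_mat n n" and acyc: "acyclic_mat A"
    and S: "S \<subseteq> {..<n}" and p: "p permutes S" and v: "v \<in> S"
    and pv: "p v \<noteq> v" and ppv: "p (p v) \<noteq> v"
  shows "(\<Prod>i\<in>S. Bm A x i (p i)) = 0"
proof (rule ccontr)
  assume nz: "(\<Prod>i\<in>S. Bm A x i (p i)) \<noteq> 0"
  have finS: "finite S" using S finite_subset by blast
  have nzi: "Bm A x i (p i) \<noteq> 0" if "i \<in> S" for i
    using nz that finS by (metis prod_zero_iff)
  have perm: "permutation p" using p finS permutation_permutes by blast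
  obtain k0 where k0: "k0 > 0" "(p ^^ k0) v = v" using permutation_self[OF perm] by blast
  define k where "k = (LEAST k. 0 < k \<and> (p ^^ k) v = v)"
  have kk: "0 < k \<and> (p ^^ k) v = v" unfolding k_def by (rule LeastI[of _ k0]) (use k0 in simp)
  have kmin: "(p ^^ m) v \<noteq> v" if "0 < m" "m < k" for m
    using not_less_Least[of m "\<lambda>k. 0 < k \<and> (p ^^ k) v = v"] that unfolding k_def by blast
  have k1: "k \<noteq> 1" using kk pv by auto
  have k2: "k \<noteq> 2" using kk ppv by (auto simp: numeral_2_eq_2)
  have k3: "k \<ge> 3" using kk k1 k2 by linarith
  define c where "c = map (\<lambda>i. (p ^^ i) v) [0..<k]"
  have injc: "inj_on (\<lambda>i. (p ^^ i) v) {0..<k}"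
    by (rule inj_on_funpow_least) (use kk kmin in auto)
  have dc: "distinct c" unfolding c_def using injc by (simp add: distinct_map)
  have inS: "(p ^^ i) v \<in> S" for i using permutes_in_funpow_image[OF p v] .
  have lc: "length c = k" by (simp add: c_def)
  have cnth: "c ! i = (p ^^ i) v" if "i < k" for i using that by (simp add: c_def)
  have step: "mat_adj A ((p ^^ i) v) ((p ^^ Suc i) v)" if "Suc i < k" for i
  proof -
    have eq: "(p ^^ Suc i) v = p ((p ^^ i) v)" by simp
    have ne: "(p ^^ i) v \<noteq> p ((p ^^ i) v)"
      using inj_onD[OF injc, of i "Suc i"] that eq by auto
    have i1: "(p ^^ i) v < n" using inS S by blast
    have i2: "p ((p ^^ i) v) < n" using inS[of "Suc i"] S eq by auto
    have "Bm A x ((p ^^ i) v) (p ((p ^^ i) v)) \<noteq> 0" using nzi inS by blast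
    then show ?thesis unfolding eq by (rule adj_of_Bm[OF A i1 i2 ne])
  qed
  have "is_gcycle A c"
    unfolding is_gcycle_def is_gpath_def
  proof (intro conjI allI impI)
    show "3 \<le> length c" using lc k3 by simp
    show "c \<noteq> []" using lc k3 by auto
    show "distinct c" by (rule dc)
    show "set c \<subseteq> {..<dim_row A}" using inS S A by (force simp: c_def)
    fix i assume "Suc i < length c"
    then show "mat_adj A (c ! i) (c ! Suc i)" using step[of i] lc cnth[of i] cnth[of "Suc i"] by simp
  next
    have cne: "c \<noteq> []" using lc k3 by auto
    have hd: "hd c = v" using hd_conv_nth[OF cne] cnth[of 0] k3 by simp
    have lst: "last c = (p ^^ (k - 1)) v" using last_conv_nth[OF cne] cnth[of "k - 1"] lc k3 by simp
    have "Suc (k - 1) = k" using k3 by simp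
    then have pl: "p (last c) = v" using lst kk by (metis comp_apply funpow.simps(2))
    have ne: "last c \<noteq> v" using kmin[of "k - 1"] k3 lst by simp
    have "Bm A x (last c) (p (last c)) \<noteq> 0" using nzi inS lst by simp
    then have bz: "Bm A x (last c) v \<noteq> 0" unfolding pl .
    have l1: "last c < n" using inS lst S by auto
    have h1: "v < n" using v S by auto
    show "mat_adj A (last c) (hd c)" unfolding hd by (rule adj_of_Bm[OF A l1 h1 ne bz])
  qed
  then show False using acyc by (auto simp: acyclic_mat_def)
qed


lemma vertex_exp:
  assumes A: "A \<in> carrier_mat n n" and acyc: "acyclic_mat A"
    and S: "S \<subseteq> {..<n}" and v: "v \<in> S"
  shows "Dset (Bm A x) S = Bm A x v v * Dset (Bm A x) (S - {v})
     - (\<Sum>w\<in>S - {v}. Bm A x v w * Bm A x w v * Dset (Bm A x) (S - {v} - {w}))"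
proof -
  define B where "B = Bm A x"
  define S' where "S' = S - {v}"
  have finS: "finite S" using S finite_subset by blast
  have fin': "finite S'" using finS S'_def by simp
  have vS': "v \<notin> S'" by (simp add: S'_def)
  have SS: "S = insert v S'" using v S'_def by auto
  define f where "f = (\<lambda>p. of_int (sign p) * (\<Prod>i\<in>S. B i (p i)))"
  have "Dset B S = sum f {p. p permutes insert v S'}" by (simp add: Dset_def f_def SS)
  also have "\<dots> = (\<Sum>b\<in>insert v S'. \<Sum>q\<in>{p. p permutes S'}. f (Transposition.transpose v b \<circ> q))"
    by (rule sum_over_permutations_insert[OF fin' vS'])
  also have "\<dots> = (\<Sum>q\<in>{p. p permutes S'}. f q)
      + (\<Sum>w\<in>S'. \<Sum>q\<in>{p. p permutes S'}. f (Transposition.transpose v w \<circ> q))"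
    using fin' vS' by (simp add: sum.insert)
  also have "(\<Sum>q\<in>{p. p permutes S'}. f q) = B v v * Dset B S'"
  proof -
    have "f q = B v v * (of_int (sign q) * (\<Prod>i\<in>S'. B i (q i)))" if q: "q permutes S'" for q
    proof -
      have "q v = v" by (rule permutes_not_in[OF q vS'])
      then show ?thesis unfolding f_def SS using fin' vS' by (simp add: prod.insert)
    qed
    then show ?thesis by (simp add: Dset_def sum_distrib_left)
  qed
  also have "(\<Sum>w\<in>S'. \<Sum>q\<in>{p. p permutes S'}. f (Transposition.transpose v w \<circ> q))
      = (\<Sum>w\<in>S'. - (B v w * B w v * Dset B (S' - {w})))"
  proof (rule sum.cong[OF refl])
    fix w assume w: "w \<in> S'"
    define S'' where "S'' = S' - {w}"
    have fin'': "finite S''" using fin' S''_def by simp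
    have wS'': "w \<notin> S''" by (simp add: S''_def)
    have SS': "S' = insert w S''" using w S''_def by auto
    have vS'': "v \<notin> S''" using vS' S''_def by simp
    have vw: "v \<noteq> w" using w vS' by auto
    have S''S: "S'' \<subseteq> S" using S''_def S'_def by auto
    have wS: "w \<in> S" using w S'_def by simp
    define g where "g = (\<lambda>q. f (Transposition.transpose v w \<circ> q))"
    have "(\<Sum>q\<in>{p. p permutes S'}. g q)
        = (\<Sum>c\<in>insert w S''. \<Sum>r\<in>{p. p permutes S''}. g (Transposition.transpose w c \<circ> r))"
      unfolding SS' by (rule sum_over_permutations_insert[OF fin'' wS''])
    also have "\<dots> = (\<Sum>r\<in>{p. p permutes S''}. g r)
        + (\<Sum>c\<in>S''. \<Sum>r\<in>{p. p permutes S''}. g (Transposition.transpose w c \<circ> r))"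
      using fin'' wS'' by (simp add: sum.insert)
    also have "(\<Sum>c\<in>S''. \<Sum>r\<in>{p. p permutes S''}. g (Transposition.transpose w c \<circ> r)) = 0"
    proof (rule sum.neutral, rule ballI, rule sum.neutral, rule ballI)
      fix c r assume c: "c \<in> S''" and r: "r \<in> {p. p permutes S''}"
      define p where "p = Transposition.transpose v w \<circ> (Transposition.transpose w c \<circ> r)"
      have r': "r permutes S''" using r by simp
      have cS: "c \<in> S" using c S''S by blast
      have cv: "c \<noteq> v" "c \<noteq> w" using c vS'' wS'' by auto
      have rS: "r permutes S" using permutes_subset[OF r' S''S] .
      have pp: "p permutes S" unfolding p_def
        by (intro permutes_compose rS permutes_swap_id v wS cS)
      have rv: "r v = v" by (rule permutes_not_in[OF r' vS''])
      have rw: "r w = w" by (rule permutes_not_in[OF r' wS''])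
      have pv: "p v = w" using rv cv vw by (simp add: p_def)
      have pw: "p w = c" using rw cv vw by (simp add: p_def)
      have "(\<Prod>i\<in>S. Bm A x i (p i)) = 0"
        by (rule perm_cycle_zero[OF A acyc S pp v]) (use pv pw cv vw in auto)
      then show "g (Transposition.transpose w c \<circ> r) = 0"
        by (simp add: g_def f_def p_def B_def comp_assoc)
    qed
    also have "(\<Sum>r\<in>{p. p permutes S''}. g r) = - (B v w * B w v * Dset B S'')"
    proof -
      have "g r = - (B v w * B w v) * (of_int (sign r) * (\<Prod>i\<in>S''. B i (r i)))"
        if r: "r permutes S''" for r
      proof -
        have rv: "r v = v" by (rule permutes_not_in[OF r vS''])
        have rw: "r w = w" by (rule permutes_not_in[OF r wS''])
        have perm: "permutation r" unfolding permutation_permutes using r fin'' by blast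
        have sg: "sign (Transposition.transpose v w \<circ> r) = - sign r"
          using sign_compose[OF permutation_swap_id perm, of v w] vw by (simp add: sign_swap_id)
        have S3: "S = insert v (insert w S'')" using SS SS' by simp
        have "(\<Prod>i\<in>S''. B i (Transposition.transpose v w (r i))) = (\<Prod>i\<in>S''. B i (r i))"
        proof (rule prod.cong[OF refl])
          fix i assume i: "i \<in> S''"
          then have "r i \<in> S''" using permutes_in_image[OF r] by simp
          then have "r i \<noteq> v" "r i \<noteq> w" using vS'' wS'' by auto
          then show "B i (Transposition.transpose v w (r i)) = B i (r i)" by simp
        qed
        then have pr: "(\<Prod>i\<in>S. B i ((Transposition.transpose v w \<circ> r) i))
            = B v w * B w v * (\<Prod>i\<in>S''. B i (r i))"
          unfolding S3 using fin'' vS'' wS'' vw rv rw by (simp add: prod.insert)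
        show ?thesis unfolding g_def f_def using sg pr by simp
      qed
      then show ?thesis by (simp add: Dset_def sum_distrib_left sum_negf)
    qed
    finally show "(\<Sum>q\<in>{p. p permutes S'}. f (Transposition.transpose v w \<circ> q))
        = - (B v w * B w v * Dset B (S' - {w}))" by (simp add: g_def S''_def)
  qed
  finally show ?thesis by (simp add: B_def S'_def sum_negf)
qed


fun wk :: "real mat \<Rightarrow> nat list \<Rightarrow> bool" where
  "wk A [] = False"
| "wk A [x] = (x < dim_row A)"
| "wk A (x # y # xs) = (mat_adj A x y \<and> wk A (y # xs))"

lemma wk_idx:
  "wk A p \<longleftrightarrow> p \<noteq> [] \<and> set p \<subseteq> {..<dim_row A} \<and>
     (\<forall>i. Suc i < length p \<longrightarrow> mat_adj A (p ! i) (p ! Suc i))"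
proof (induction A p rule: wk.induct)
  case (3 A x y xs)
  have "(\<forall>i. Suc i < length (x # y # xs) \<longrightarrow> mat_adj A ((x # y # xs) ! i) ((x # y # xs) ! Suc i))
     \<longleftrightarrow> mat_adj A x y \<and> (\<forall>i. Suc i < length (y # xs) \<longrightarrow> mat_adj A ((y # xs) ! i) ((y # xs) ! Suc i))"
    (is "?L \<longleftrightarrow> ?R")
  proof
    assume L: ?L
    show ?R
    proof (intro conjI allI impI)
      show "mat_adj A x y" using L[rule_format, of 0] by simp
      fix i assume "Suc i < length (y # xs)"
      then show "mat_adj A ((y # xs) ! i) ((y # xs) ! Suc i)" using L[rule_format, of "Suc i"] by simp
    qed
  next
    assume R: ?R
    show ?L
    proof (intro allI impI)
      fix i assume i: "Suc i < length (x # y # xs)"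
      show "mat_adj A ((x # y # xs) ! i) ((x # y # xs) ! Suc i)"
      proof (cases i)
        case 0 then show ?thesis using R by simp
      next
        case (Suc j) then show ?thesis using R i by simp
      qed
    qed
  qed
  moreover have "mat_adj A x y \<Longrightarrow> x < dim_row A" by (simp add: mat_adj_def)
  ultimately show ?case using "3.IH" by auto
qed auto

lemma gpath_wk: "is_gpath A p \<longleftrightarrow> wk A p \<and> distinct p"
  unfolding is_gpath_def wk_idx by auto

lemma wk_append:
  assumes "xs \<noteq> []" "ys \<noteq> []"
  shows "wk A (xs @ ys) \<longleftrightarrow> wk A xs \<and> wk A ys \<and> mat_adj A (last xs) (hd ys)"
  using assms
proof (induction xs rule: induct_list012)
  case (2 x)
  then show ?case by (cases ys) (auto simp: mat_adj_def)
next
  case (3 x y zs)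
  then show ?case by auto
qed simp

lemma mat_adj_sym:
  assumes "A\<^sup>T = A" "mat_adj A x y" shows "mat_adj A y x"
proof -
  have dc: "dim_col A = dim_row A" using arg_cong[OF assms(1), of dim_row] by simp
  have "A $$ (y, x) = A\<^sup>T $$ (x, y)" using assms(2) dc by (auto simp: mat_adj_def)
  then show ?thesis using assms by (auto simp: mat_adj_def)
qed

lemma wk_rev:
  assumes "A\<^sup>T = A" "wk A xs" shows "wk A (rev xs)"
  using assms(2)
proof (induction xs rule: induct_list012)
  case (3 x y zs)
  have "rev (x # y # zs) = rev (y # zs) @ [x]" by simp
  moreover have "wk A (rev (y # zs))" using 3 by simp
  moreover have "mat_adj A y x" using 3 mat_adj_sym[OF assms(1)] by simp
  moreover have "x < dim_row A" using 3 by (simp add: mat_adj_def)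
  ultimately show ?case using wk_append[of "rev (y # zs)" "[x]" A] by simp
qed simp_all

lemma wk_to_path:
  assumes "wk A xs"
  shows "\<exists>ys. wk A ys \<and> distinct ys \<and> hd ys = hd xs \<and> last ys = last xs \<and> set ys \<subseteq> set xs"
  using assms
proof (induction "length xs" arbitrary: xs rule: less_induct)
  case less
  show ?case
  proof (cases "distinct xs")
    case True then show ?thesis using less.prems by blast
  next
    case False
    then obtain as x bs cs where xs: "xs = as @ [x] @ bs @ [x] @ cs"
      using not_distinct_decomp by blast
    define zs where "zs = as @ [x] @ cs"
    have w1: "wk A (as @ [x])" and w2: "wk A (x # cs)"
    proof -
      have "wk A ((as @ [x]) @ (bs @ [x] @ cs))" using less.prems xs by simp
      then show "wk A (as @ [x])" using wk_append[of "as @ [x]" "bs @ [x] @ cs"] by simp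
      have "wk A ((as @ [x] @ bs) @ (x # cs))" using less.prems xs by simp
      then show "wk A (x # cs)" using wk_append[of "as @ [x] @ bs" "x # cs"] by simp
    qed
    have wz: "wk A zs"
    proof (cases "as = []")
      case True then show ?thesis using w2 by (simp add: zs_def)
    next
      case False
      have "wk A as \<and> mat_adj A (last as) x" using w1 wk_append[OF False, of "[x]"] by simp
      then show ?thesis using wk_append[OF False, of "x # cs"] w2 by (simp add: zs_def)
    qed
    have len: "length zs < length xs" using xs by (simp add: zs_def)
    obtain ys where ys: "wk A ys" "distinct ys" "hd ys = hd zs" "last ys = last zs" "set ys \<subseteq> set zs"
      using less.hyps[OF len wz] by blast
    have "hd zs = hd xs" using xs by (cases as) (auto simp: zs_def)
    moreover have "last zs = last xs" using xs by (cases cs) (auto simp: zs_def)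
    moreover have "set zs \<subseteq> set xs" using xs by (auto simp: zs_def)
    ultimately show ?thesis using ys by auto
  qed
qed

lemma gcycle_wk:
  assumes "length c \<ge> 3" "wk A c" "distinct c" "mat_adj A (last c) (hd c)"
  shows "is_gcycle A c"
  using assms by (simp add: is_gcycle_def gpath_wk)

lemma gpath_unique:
  assumes sym: "A\<^sup>T = A" and acyc: "acyclic_mat A"
  shows "gpath_from A u v p \<Longrightarrow> gpath_from A u v q \<Longrightarrow> p = q"
proof (induction p arbitrary: u q)
  case Nil
  then show ?case by (simp add: gpath_from_def is_gpath_def)
next
  case (Cons x p1)
  have ux: "u = x" using Cons.prems by (simp add: gpath_from_def)
  have wp: "wk A (u # p1)" "distinct (u # p1)" "last (u # p1) = v"
    using Cons.prems ux by (auto simp: gpath_from_def gpath_wk)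
  obtain q1 where q: "q = u # q1"
    using Cons.prems(2) by (cases q) (auto simp: gpath_from_def is_gpath_def)
  have wq: "wk A (u # q1)" "distinct (u # q1)" "last (u # q1) = v"
    using Cons.prems q by (auto simp: gpath_from_def gpath_wk)
  show ?case
  proof (cases "p1 = []")
    case True
    then have "v = u" using wp by simp
    show ?thesis
    proof (cases "q1 = []")
      case True then show ?thesis using \<open>p1 = []\<close> q ux by simp
    next
      case False
      then have "last q1 \<in> set q1" by simp
      then show ?thesis using wq False \<open>v = u\<close> by auto
    qed
  next
    case p1ne: False
    show ?thesis
    proof (cases "q1 = []")
      case True
      then have "v = u" using wq by simp
      have "last p1 \<in> set p1" using p1ne by simp
      then show ?thesis using wp p1ne \<open>v = u\<close> by auto
    next
      case q1ne: False
      obtain a p2 where p1: "p1 = a # p2" using p1ne by (cases p1) auto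
      obtain b q2 where q1: "q1 = b # q2" using q1ne by (cases q1) auto
      have wp1: "wk A p1" using wp p1 by simp
      have wq1: "wk A q1" using wq q1 by simp
      have lp1: "last p1 = v" using wp p1ne by simp
      have lq1: "last q1 = v" using wq q1ne by simp
      have adjua: "mat_adj A u a" using wp p1 by simp
      have adjub: "mat_adj A u b" using wq q1 by simp
      show ?thesis
      proof (cases "a = b")
        case True
        have "gpath_from A a v p1" using wp1 wp lp1 p1 by (simp add: gpath_from_def gpath_wk)
        moreover have "gpath_from A a v q1" using wq1 wq lq1 q1 True by (simp add: gpath_from_def gpath_wk)
        ultimately have "p1 = q1" using Cons.IH by blast
        then show ?thesis using q ux by simp
      next
        case False
        define wl where "wl = butlast p1 @ rev q1"
        have wr: "wk A (rev q1)" using wk_rev[OF sym wq1] .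
        have rq: "rev q1 \<noteq> []" using q1ne by simp
        have hr: "hd (rev q1) = v" using lq1 q1ne by (simp add: hd_rev)
        have wwl: "wk A wl \<and> hd wl = a"
        proof (cases "butlast p1 = []")
          case True
          then have "p1 = [a]" using p1 by (cases p2) auto
          then show ?thesis using True wr hr lp1 by (simp add: wl_def)
        next
          case bne: False
          have p1eq: "p1 = butlast p1 @ [last p1]" using p1ne by simp
          have "wk A (butlast p1) \<and> mat_adj A (last (butlast p1)) (last p1)"
            using wp1 wk_append[OF bne, of "[last p1]"] p1eq by (metis list.sel(1) not_Cons_self2)
          then have "wk A wl" using wk_append[OF bne rq] wr hr lp1 by (simp add: wl_def)
          moreover have "hd wl = a" using bne p1 by (simp add: wl_def hd_append) (metis butlast.simps(2) list.sel(1))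
          ultimately show ?thesis by simp
        qed
        have lwl: "last wl = b" using q1 by (simp add: wl_def last_rev)
        have swl: "set wl \<subseteq> set p1 \<union> set q1" by (auto simp: wl_def dest: in_set_butlastD)
        obtain ys where ys: "wk A ys" "distinct ys" "hd ys = a" "last ys = b" "set ys \<subseteq> set wl"
          using wk_to_path[of A wl] wwl lwl by auto
        have uys: "u \<notin> set ys" using ys(5) swl wp(2) wq(2) by auto
        have yne: "ys \<noteq> []" using ys(1) by auto
        obtain y ys' where ysc: "ys = y # ys'" using yne by (cases ys) auto
        have "ys' \<noteq> []" using ysc ys False by auto
        then have len: "length (u # ys) \<ge> 3" using ysc by (cases ys') auto
        have wc: "wk A (u # ys)" using ysc ys adjua by simp
        have dc: "distinct (u # ys)" using ys uys by simp
        have lc: "mat_adj A (last (u # ys)) (hd (u # ys))"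
          using ys yne mat_adj_sym[OF sym adjub] by simp
        have "is_gcycle A (u # ys)" using gcycle_wk[OF len wc dc lc] .
        then show ?thesis using acyc by (auto simp: acyclic_mat_def)
      qed
    qed
  qed
qed

lemma upath_eq:
  assumes "A\<^sup>T = A" "acyclic_mat A" "gpath_from A u v p"
  shows "upath A u v = p"
  unfolding upath_def using gpath_unique[OF assms(1,2)] assms(3) by blast

lemma gpath_single: "u < dim_row A \<Longrightarrow> gpath_from A u u [u]"
  by (simp add: gpath_from_def is_gpath_def)

lemma gpath_snoc:
  assumes "gpath_from A u v p" "k \<notin> set p" "mat_adj A v k"
  shows "gpath_from A u k (p @ [k])"
proof -
  have p: "wk A p" "distinct p" "hd p = u" "last p = v" "p \<noteq> []"
    using assms(1) by (auto simp: gpath_from_def gpath_wk is_gpath_def)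
  have "wk A [k]" using assms(3) by (simp add: mat_adj_def)
  then have "wk A (p @ [k])" using wk_append[OF p(5), of "[k]"] p assms(3) by simp
  then show ?thesis using p assms(2) by (simp add: gpath_from_def gpath_wk)
qed

lemma gpath_butlast:
  assumes "gpath_from A u v p" "v \<noteq> u"
  shows "butlast p \<noteq> [] \<and> gpath_from A u (last (butlast p)) (butlast p)
     \<and> mat_adj A (last (butlast p)) v \<and> p = butlast p @ [v]"
proof -
  have p: "wk A p" "distinct p" "hd p = u" "last p = v" "p \<noteq> []"
    using assms(1) by (auto simp: gpath_from_def gpath_wk is_gpath_def)
  have peq: "p = butlast p @ [v]" using append_butlast_last_id[OF p(5)] p(4) by simp
  have bne: "butlast p \<noteq> []"
  proof
    assume "butlast p = []"
    then have "p = [v]" using peq by simp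
    then show False using p assms(2) by simp
  qed
  have w: "wk A (butlast p) \<and> mat_adj A (last (butlast p)) v"
    using wk_append[OF bne, of "[v]"] p peq by (metis list.sel(1) not_Cons_self2)
  have "hd (butlast p) = u" using bne p peq by (metis hd_append2)
  moreover have "distinct (butlast p)" using p by (simp add: distinct_butlast)
  ultimately show ?thesis using w bne peq by (simp add: gpath_from_def gpath_wk)
qed

lemma gpath_self:
  assumes "gpath_from A u u p" shows "p = [u]"
proof -
  have p: "distinct p" "hd p = u" "last p = u" "p \<noteq> []"
    using assms by (auto simp: gpath_from_def is_gpath_def)
  obtain x p' where pc: "p = x # p'" using p by (cases p) auto
  show ?thesis
  proof (cases "p' = []")
    case True then show ?thesis using pc p by simp
  next
    case False
    then have "last p' \<in> set p'" by simp
    then show ?thesis using p pc False by auto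
  qed
qed

lemma gpath_prefix:
  assumes "gpath_from A u v p" "j \<in> set p"
  shows "\<exists>q. gpath_from A u j q"
proof -
  obtain i where i: "i < length p" "p ! i = j" using assms(2) by (metis in_set_conv_nth)
  define q where "q = take (Suc i) p"
  have "is_gpath A p" "hd p = u" using assms(1) by (auto simp: gpath_from_def)
  then have "is_gpath A q" using i unfolding is_gpath_def q_def
    by (auto dest: in_set_takeD)
  moreover have "hd q = u" using \<open>hd p = u\<close> i by (simp add: q_def hd_take)
  moreover have "last q = j" using i by (simp add: q_def take_Suc_conv_app_nth)
  ultimately show ?thesis unfolding gpath_from_def by blast
qed

lemma gpath_no_back:
  assumes acyc: "acyclic_mat A" and P: "is_gpath A P" and i: "i + 2 < length P"
  shows "\<not> mat_adj A (last P) (P ! i)"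
proof
  assume adj: "mat_adj A (last P) (P ! i)"
  define c where "c = drop i P"
  have "is_gpath A c" using P i unfolding is_gpath_def c_def
    by (auto dest: in_set_dropD)
  moreover have "length c \<ge> 3" using i by (simp add: c_def)
  moreover have "hd c = P ! i" using i by (simp add: c_def hd_drop_conv_nth)
  moreover have "last c = last P" using i by (simp add: c_def)
  ultimately have "is_gcycle A c" using adj by (simp add: is_gcycle_def)
  then show False using acyc by (auto simp: acyclic_mat_def)
qed

lemma path_weight_snoc:
  assumes "p \<noteq> []"
  shows "path_weight A (p @ [k]) = path_weight A p * A $$ (last p, k)"
proof -
  obtain m where m: "length p = Suc m" using assms by (cases p) auto
  have "path_weight A (p @ [k]) = (\<Prod>i<Suc m. A $$ ((p @ [k]) ! i, (p @ [k]) ! Suc i))"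
    by (simp add: path_weight_def m)
  also have "\<dots> = (\<Prod>i<m. A $$ ((p @ [k]) ! i, (p @ [k]) ! Suc i)) * A $$ ((p @ [k]) ! m, (p @ [k]) ! Suc m)"
    by simp
  also have "(\<Prod>i<m. A $$ ((p @ [k]) ! i, (p @ [k]) ! Suc i)) = (\<Prod>i<m. A $$ (p ! i, p ! Suc i))"
    by (rule prod.cong) (auto simp: nth_append m)
  also have "(p @ [k]) ! m = last p" using m assms by (simp add: nth_append last_conv_nth)
  also have "(p @ [k]) ! Suc m = k" using m by (simp add: nth_append)
  finally show ?thesis by (simp add: path_weight_def m)
qed


definition conn :: "real mat \<Rightarrow> nat \<Rightarrow> nat \<Rightarrow> bool" where
  "conn A u j \<longleftrightarrow> (\<exists>p. gpath_from A u j p)"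

definition aval :: "real mat \<Rightarrow> nat \<Rightarrow> real \<Rightarrow> nat \<Rightarrow> real" where
  "aval A u lam j = (if conn A u j then path_weight A (upath A u j) *
      Dset (Bm A lam) ({..<dim_row A} - set (upath A u j)) else 0)"

context
  fixes A :: "real mat" and n :: nat and lam :: real and u :: nat
  assumes A: "A \<in> carrier_mat n n" and sym: "A\<^sup>T = A" and acyc: "acyclic_mat A" and un: "u < n"
begin

lemma Asym: "i < n \<Longrightarrow> j < n \<Longrightarrow> A $$ (i, j) = A $$ (j, i)"
  by (metis A carrier_matD(1) carrier_matD(2) index_transpose_mat(1) sym)

lemma Bsym: "i < n \<Longrightarrow> j < n \<Longrightarrow> Bm A lam i j = Bm A lam j i"
  using Asym by (auto simp: Bm_def)

lemma BA: "i \<noteq> j \<Longrightarrow> Bm A lam i j = - A $$ (i, j)"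
  by (simp add: Bm_def)

lemma dimr: "dim_row A = n" using A by simp

lemma upath_single: "upath A u u = [u]"
  by (rule upath_eq[OF sym acyc gpath_single]) (simp add: dimr un)

lemma aval_u: "aval A u lam u = Dset (Bm A lam) ({..<n} - {u})"
proof -
  have "conn A u u" unfolding conn_def using gpath_single[of u A] un dimr by auto
  then show ?thesis by (simp add: aval_def upath_single path_weight_def dimr)
qed

lemma case_u:
  "(\<Sum>k\<in>{..<n}. Bm A lam u k * aval A u lam k) = Dset (Bm A lam) {..<n}"
proof -
  let ?B = "Bm A lam"
  let ?N = "{..<n}"
  have tm: "?B u k * aval A u lam k = - (?B u k * ?B k u * Dset ?B (?N - {u} - {k}))"
    if k: "k \<in> ?N - {u}" for k
  proof (cases "?B u k = 0")
    case True then show ?thesis by simp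
  next
    case False
    have kn: "k < n" "k \<noteq> u" using k by auto
    have adj: "mat_adj A u k" using adj_of_Bm[OF A un kn(1)] kn False by auto
    have gp: "gpath_from A u k [u, k]"
      using gpath_snoc[OF gpath_single[of u A], of k] adj kn un dimr by simp
    have up: "upath A u k = [u, k]" by (rule upath_eq[OF sym acyc gp])
    have cn: "conn A u k" using gp conn_def by blast
    have pw: "path_weight A [u, k] = A $$ (u, k)" by (simp add: path_weight_def)
    have st: "{..<n} - set [u, k] = ?N - {u} - {k}" by auto
    have "aval A u lam k = A $$ (u, k) * Dset ?B (?N - {u} - {k})"
      unfolding aval_def using cn up pw st dimr by simp
    then show ?thesis using BA[of u k] Bsym[of u k] kn un by simp
  qed
  have "(\<Sum>k\<in>?N. ?B u k * aval A u lam k) = ?B u u * aval A u lam u + (\<Sum>k\<in>?N - {u}. ?B u k * aval A u lam k)"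
    using un by (simp add: sum.remove)
  also have "(\<Sum>k\<in>?N - {u}. ?B u k * aval A u lam k) = - (\<Sum>k\<in>?N - {u}. ?B u k * ?B k u * Dset ?B (?N - {u} - {k}))"
    using tm by (simp add: sum_negf)
  also have "?B u u * aval A u lam u + - (\<Sum>k\<in>?N - {u}. ?B u k * ?B k u * Dset ?B (?N - {u} - {k}))
      = Dset ?B ?N"
    using vertex_exp[OF A acyc, of ?N u lam] un aval_u by simp
  finally show ?thesis .
qed

lemma case_nconn:
  assumes j: "j < n" and nc: "\<not> conn A u j"
  shows "(\<Sum>k\<in>{..<n}. Bm A lam j k * aval A u lam k) = 0"
proof (rule sum.neutral, rule ballI)
  fix k assume k: "k \<in> {..<n}"
  show "Bm A lam j k * aval A u lam k = 0"
  proof (cases "k = j \<or> Bm A lam j k = 0")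
    case True then show ?thesis using nc by (auto simp: aval_def)
  next
    case False
    have adj: "mat_adj A k j" using adj_of_Bm[OF A _ j, of k lam] k False Bsym[of j k] j by auto
    have "\<not> conn A u k"
    proof
      assume "conn A u k"
      then obtain Q where Q: "gpath_from A u k Q" by (auto simp: conn_def)
      show False
      proof (cases "j \<in> set Q")
        case True then show False using gpath_prefix[OF Q True] nc by (auto simp: conn_def)
      next
        case False then show False using gpath_snoc[OF Q False adj] nc by (auto simp: conn_def)
      qed
    qed
    then show ?thesis by (simp add: aval_def)
  qed
qed

lemma case_conn:
  assumes j: "j < n" and ju: "j \<noteq> u" and cj: "conn A u j"
  shows "(\<Sum>k\<in>{..<n}. Bm A lam j k * aval A u lam k) = 0"
proof -
  let ?B = "Bm A lam"
  let ?N = "{..<n}"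
  let ?a = "aval A u lam"
  obtain P0 where P0: "gpath_from A u j P0" using cj by (auto simp: conn_def)
  define P where "P = upath A u j"
  have PP: "gpath_from A u j P" using upath_eq[OF sym acyc P0] P0 by (simp add: P_def)
  define P' where "P' = butlast P"
  define j' where "j' = last P'"
  have bl: "P' \<noteq> [] \<and> gpath_from A u j' P' \<and> mat_adj A j' j \<and> P = P' @ [j]"
    using gpath_butlast[OF PP ju] by (simp add: P'_def j'_def)
  then have P'ne: "P' \<noteq> []" and PP': "gpath_from A u j' P'" and adjj: "mat_adj A j' j"
    and Peq: "P = P' @ [j]" by auto
  have upP': "upath A u j' = P'" by (rule upath_eq[OF sym acyc PP'])
  have cj': "conn A u j'" using PP' conn_def by blast
  have distP: "distinct P" using PP by (simp add: gpath_from_def is_gpath_def)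
  have jP': "j \<notin> set P'" using distP Peq by simp
  have j'P': "j' \<in> set P'" using P'ne by (simp add: j'_def)
  have setP: "set P = insert j (set P')" using Peq by simp
  have PN: "set P \<subseteq> ?N" using PP dimr by (simp add: gpath_from_def is_gpath_def)
  have j'n: "j' < n" using PN j'P' setP by auto
  have jj': "j \<noteq> j'" using jP' j'P' by auto
  have aj: "?a j = path_weight A P * Dset ?B (?N - set P)"
    using cj by (simp add: aval_def P_def dimr)
  have aj': "?a j' = path_weight A P' * Dset ?B (?N - set P')"
    using cj' upP' by (simp add: aval_def dimr)
  have wP: "path_weight A P = path_weight A P' * A $$ (j', j)"
    using path_weight_snoc[OF P'ne, of A j] Peq by (simp add: j'_def)
  have zero_mid: "?B j k = 0" if k: "k \<in> set P' - {j'}" for k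
  proof (rule ccontr)
    assume nz: "?B j k \<noteq> 0"
    have kn: "k < n" using k PN setP by auto
    have kj: "j \<noteq> k" using k jP' by auto
    have adj: "mat_adj A j k" using adj_of_Bm[OF A j kn kj nz] .
    obtain i where i: "i < length P'" "P' ! i = k" using k by (metis DiffD1 in_set_conv_nth)
    have "i \<noteq> length P' - 1" using i k P'ne by (auto simp: j'_def last_conv_nth)
    then have i2: "i + 2 < length P" using i Peq by simp
    have "P ! i = k" using i Peq by (simp add: nth_append)
    moreover have "last P = j" using Peq by simp
    moreover have "is_gpath A P" using PP by (simp add: gpath_from_def)
    ultimately show False using gpath_no_back[OF acyc _ i2] adj by simp
  qed
  have off: "?B j k * ?a k = - (path_weight A P * (?B j k * ?B k j * Dset ?B (?N - set P - {k})))"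
    if k: "k \<in> ?N - set P" for k
  proof (cases "?B j k = 0")
    case True then show ?thesis by simp
  next
    case False
    have kn: "k < n" and kP: "k \<notin> set P" using k by auto
    have kj: "j \<noteq> k" using kP setP by auto
    have adj: "mat_adj A j k" using adj_of_Bm[OF A j kn kj False] .
    have gp: "gpath_from A u k (P @ [k])" by (rule gpath_snoc[OF PP kP adj])
    have up: "upath A u k = P @ [k]" by (rule upath_eq[OF sym acyc gp])
    have cn: "conn A u k" using gp conn_def by blast
    have Pne: "P \<noteq> []" using Peq by simp
    have lP: "last P = j" using Peq by simp
    have pw: "path_weight A (P @ [k]) = path_weight A P * A $$ (j, k)"
      using path_weight_snoc[OF Pne, of A k] lP by simp
    have st: "?N - set (P @ [k]) = ?N - set P - {k}" by auto
    have "?a k = path_weight A P * A $$ (j, k) * Dset ?B (?N - set P - {k})"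
      unfolding aval_def using cn up pw st dimr by simp
    then show ?thesis using BA[OF kj] Bsym[OF j kn] by simp
  qed
  have fin: "finite ?N" by simp
  have "(\<Sum>k\<in>?N. ?B j k * ?a k) = (\<Sum>k\<in>?N - set P. ?B j k * ?a k) + (\<Sum>k\<in>set P. ?B j k * ?a k)"
    by (rule sum.subset_diff[OF PN fin])
  also have "(\<Sum>k\<in>set P. ?B j k * ?a k) = ?B j j * ?a j + (\<Sum>k\<in>set P'. ?B j k * ?a k)"
    using setP jP' by simp
  also have "(\<Sum>k\<in>set P'. ?B j k * ?a k) = ?B j j' * ?a j' + (\<Sum>k\<in>set P' - {j'}. ?B j k * ?a k)"
    using j'P' by (simp add: sum.remove)
  also have "(\<Sum>k\<in>set P' - {j'}. ?B j k * ?a k) = 0"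
    using zero_mid by (intro sum.neutral) simp
  also have "(\<Sum>k\<in>?N - set P. ?B j k * ?a k)
      = - (path_weight A P * (\<Sum>k\<in>?N - set P. ?B j k * ?B k j * Dset ?B (?N - set P - {k})))"
    using off by (simp add: sum_negf sum_distrib_left)
  finally have tot: "(\<Sum>k\<in>?N. ?B j k * ?a k) =
      - (path_weight A P * (\<Sum>k\<in>?N - set P. ?B j k * ?B k j * Dset ?B (?N - set P - {k})))
      + (?B j j * ?a j + ?B j j' * ?a j')" by simp
  define S where "S = ?N - set P'"
  have SN: "S \<subseteq> ?N" by (simp add: S_def)
  have jS: "j \<in> S" using j jP' by (simp add: S_def)
  have Sj: "S - {j} = ?N - set P" using setP by (auto simp: S_def)
  have VE: "Dset ?B S = ?B j j * Dset ?B (?N - set P)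
     - (\<Sum>k\<in>?N - set P. ?B j k * ?B k j * Dset ?B (?N - set P - {k}))"
    using vertex_exp[OF A acyc SN jS, of lam] Sj by simp
  have BA': "?B j j' = - A $$ (j', j)" using BA[OF jj'] Asym[OF j j'n] by simp
  have "(\<Sum>k\<in>?N. ?B j k * ?a k) = path_weight A P * Dset ?B S + ?B j j' * ?a j'"
    unfolding tot VE aj by (simp add: algebra_simps)
  also have "\<dots> = 0" unfolding wP aj' BA' S_def by (simp add: algebra_simps)
  finally show ?thesis .
qed

end

lemma pick_lessThan: "i < n \<Longrightarrow> pick {..<n} i = i"
proof -
  assume i: "i < n"
  have "{a \<in> {..<n}. a < i} = {..<i}" using i by auto
  then show ?thesis using pick_card_in_set[of i "{..<n}"] i by simp
qed

lemma del_mat_empty: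
  assumes A: "A \<in> carrier_mat n n" shows "del_mat A {} = A"
proof -
  have c: "{i. i < n \<and> i \<in> {..<n}} = {..<n}" by auto
  show ?thesis
    unfolding del_mat_def using A
    by (intro eq_matI) (auto simp: dim_submatrix c submatrix_index pick_lessThan)
qed

lemma phi_full:
  assumes A: "A \<in> carrier_mat n n" shows "phi A x = Dset (Bm A x) {..<n}"
  using phi_del_mat[OF A, of "{}" x] del_mat_empty[OF A] by simp

theorem theorem3p1:
  fixes n :: nat and A :: "real mat" and lam :: real and u :: nat
  assumes "A \<in> carrier_mat n n"
    and "A\<^sup>T = A"
    and "acyclic_mat A"
    and "eigenvalue A lam"
    and "order lam (char_poly A) = 1"
    and "u < n"
    and "phi (del_mat A {u}) lam \<noteq> 0"
  shows "eigenvector A (alpha_vec A u lam) lam"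
proof -
  note A = assms(1) and sym = assms(2) and acyc = assms(3) and un = assms(6)
  let ?B = "Bm A lam"
  let ?N = "{..<n}"
  let ?a = "aval A u lam"
  have dimr: "dim_row A = n" "dim_col A = n" using A by auto
  have av: "alpha_vec A u lam = vec n ?a"
    unfolding alpha_vec_def aval_def conn_def dimr phi_del_mat[OF A] ..
  have phiA: "Dset ?B ?N = 0"
    using phi_full[OF A, of lam] eigenvalue_root_char_poly[OF A] assms(4) by (simp add: phi_def)
  have key: "(\<Sum>k\<in>?N. ?B j k * ?a k) = 0" if j: "j < n" for j
  proof (cases "j = u")
    case True then show ?thesis using case_u[OF A sym acyc un] phiA by simp
  next
    case False
    show ?thesis
    proof (cases "conn A u j")
      case True then show ?thesis using case_conn[OF A sym acyc un j False] by simp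
    next
      case False then show ?thesis using case_nconn[OF A sym acyc un j] by simp
    qed
  qed
  have au: "?a u = phi (del_mat A {u}) lam"
    using aval_u[OF A sym acyc un] phi_del_mat[OF A] by simp
  have comp: "(A *\<^sub>v vec n ?a) $ j = lam * ?a j" if j: "j < n" for j
  proof -
    have "(A *\<^sub>v vec n ?a) $ j = (\<Sum>k\<in>?N. A $$ (j, k) * ?a k)"
      using j dimr by (simp add: scalar_prod_def lessThan_atLeast0)
    also have "\<dots> = (\<Sum>k\<in>?N. (if k = j then lam * ?a k else 0)) - (\<Sum>k\<in>?N. ?B j k * ?a k)"
      unfolding sum_subtractf[symmetric] by (rule sum.cong) (auto simp: Bm_def algebra_simps)
    also have "\<dots> = lam * ?a j" using key[OF j] j by simp
    finally show ?thesis .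
  qed
  show ?thesis
    unfolding eigenvector_def av dimr
  proof (intro conjI)
    show "vec n ?a \<in> carrier_vec n" by simp
    show "vec n ?a \<noteq> 0\<^sub>v n"
    proof
      assume "vec n ?a = 0\<^sub>v n"
      then have "vec n ?a $ u = 0\<^sub>v n $ u" by simp
      then show False using un au assms(7) by simp
    qed
    show "A *\<^sub>v vec n ?a = lam \<cdot>\<^sub>v vec n ?a"
      by (rule eq_vecI) (use comp dimr in auto)
  qed
qed


end
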